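(* Let $(X,T),(Y,S)$ be topological dynamical systems, let $y_0\in Y$ and $s_0\in\mathbb{N}$ with $S^{s_0}y_0=y_0$, and let $\nu=\frac1{s_0}\sum_{j=0}^{s_0-1}\delta_{S^jy_0}$. Then $$\mathcal{M}_{T\times S}(X\times Y)\cap(\pi_Y)_*^{-1}\{\nu\}=\Big\{\tfrac1{s_0}\sum_{j=0}^{s_0-1}(T\times S)^j_*(\mu\times\delta_{y_0}):\mu\in\mathcal{M}_{T^{s_0}}(X)\Big\}.$$ Consequently, for every $f\in C(X\times Y)$, $\psi_f(\nu)\ge\min_{x\in X}\frac1{s_0}\sum_{j=0}^{s_0-1}f(T^jx,S^jy_0)$.
   Context: A topological dynamical system $(X,T)$: $X$ compact metrizable, $T$ a homeomorphism; $\mathcal{M}_T(X)$ its invariant Borel probability measures. $\pi_Y(x,y)=y$. $\psi_f(\nu)=\min\{\int f\,d\lambda:\lambda\in\mathcal{M}_{T\times S}(X\times Y),(\pi_Y)_*\lambda=\nu\}$. *)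

theory Defs
  imports "HOL-Probability.Probability"
begin

definition tds :: "('a::metric_space \<Rightarrow> 'a) \<Rightarrow> bool" where
  "tds T \<longleftrightarrow> compact (UNIV :: 'a set) \<and> (\<exists>T'. homeomorphism UNIV UNIV T T')"

definition inv_measures :: "('a::topological_space \<Rightarrow> 'a) \<Rightarrow> 'a measure set" where
  "inv_measures T = {\<mu>. prob_space \<mu> \<and> sets \<mu> = sets borel \<and> distr \<mu> borel T = \<mu>}"

definition avg_measure :: "nat \<Rightarrow> (nat \<Rightarrow> 'a::topological_space measure) \<Rightarrow> 'a measure" where
  "avg_measure n \<mu>s = measure_of UNIV (sets borel)
     (\<lambda>A. (\<Sum>j<n. emeasure (\<mu>s j) A) / of_nat n)"

text \<open>\<open>\<psi>_f(\<nu>) = min { \<integral> f d\<lambda> : \<lambda> \<in> \<M>_{T\<times>S}(X\<times>Y), (\<pi>_Y)_* \<lambda> = \<nu> }\<close>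
  (the minimum is written as an infimum; it is attained).\<close>
definition psi :: "('a::topological_space \<Rightarrow> 'a) \<Rightarrow> ('b::topological_space \<Rightarrow> 'b)
    \<Rightarrow> ('a \<times> 'b \<Rightarrow> real) \<Rightarrow> 'b measure \<Rightarrow> real" where
  "psi T S f \<nu> = Inf {integral\<^sup>L m f | m. m \<in> inv_measures (map_prod T S) \<and> distr m borel snd = \<nu>}"

end

theory Submission
  imports Defs
begin

lemma compact_cbase:
  fixes dummy :: "'a::metric_space"
  assumes "compact (UNIV :: 'a set)"
  obtains B :: "'a set set" where "countable B" "\<And>b. b \<in> B \<Longrightarrow> open b"
    "\<And>U x. open U \<Longrightarrow> x \<in> U \<Longrightarrow> \<exists>b\<in>B. x \<in> b \<and> b \<subseteq> U"
proof -
  have "\<forall>n::nat. \<exists>k. finite k \<and> (UNIV::'a set) \<subseteq> (\<Union>x\<in>k. ball x (1 / Suc n))"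
    using assms unfolding compact_eq_totally_bounded by simp
  then obtain k where k: "\<And>n. finite (k n)" "\<And>n. (UNIV::'a set) \<subseteq> (\<Union>x\<in>k n. ball x (1 / Suc n))"
    by metis
  define B where "B = (\<Union>n. (\<lambda>q. ball q (1 / Suc n)) ` k n)"
  show ?thesis
  proof
    show "countable B" unfolding B_def using k(1) by (intro countable_UN) (auto intro: countable_finite)
    show "open b" if "b \<in> B" for b using that unfolding B_def by auto
    fix U :: "'a set" and x assume U: "open U" "x \<in> U"
    then obtain e where e: "e > 0" "ball x e \<subseteq> U" by (meson open_contains_ball)
    obtain n :: nat where n: "2 / Suc n < e"
    proof -
      obtain n :: nat where "inverse (Suc n) < e / 2" using e(1) reals_Archimedean by (metis half_gt_zero)
      then show ?thesis using that[of n] by (simp add: field_simps)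
    qed
    obtain q where q: "q \<in> k n" "x \<in> ball q (1 / Suc n)" using k(2)[of n] by blast
    have "ball q (1 / Suc n) \<subseteq> ball x e"
    proof
      fix z assume "z \<in> ball q (1 / Suc n)"
      then have "dist x z < 2 / Suc n" using q(2) dist_triangle2[of x z q]
        by (auto simp: mem_ball dist_commute)
      then show "z \<in> ball x e" using n by (simp add: mem_ball)
    qed
    then show "\<exists>b\<in>B. x \<in> b \<and> b \<subseteq> U" using q e unfolding B_def by blast
  qed
qed

lemma borel_prod_compact:
  assumes "compact (UNIV :: 'a::metric_space set)" "compact (UNIV :: 'b::metric_space set)"
  shows "sets (borel \<Otimes>\<^sub>M borel) = sets (borel :: ('a \<times> 'b) measure)"
proof -
  obtain BA :: "'a set set" where BA: "countable BA" "\<And>b. b \<in> BA \<Longrightarrow> open b"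
    "\<And>U x. open U \<Longrightarrow> x \<in> U \<Longrightarrow> \<exists>b\<in>BA. x \<in> b \<and> b \<subseteq> U"
    using compact_cbase[OF assms(1)] by blast
  obtain BB :: "'b set set" where BB: "countable BB" "\<And>b. b \<in> BB \<Longrightarrow> open b"
    "\<And>U x. open U \<Longrightarrow> x \<in> U \<Longrightarrow> \<exists>b\<in>BB. x \<in> b \<and> b \<subseteq> U"
    using compact_cbase[OF assms(2)] by blast
  have 1: "id \<in> borel \<rightarrow>\<^sub>M (borel \<Otimes>\<^sub>M borel :: ('a \<times> 'b) measure)"
    by (simp add: measurable_pair_iff borel_measurable_continuous_onI continuous_on_fst continuous_on_snd
        continuous_on_id)
  have 2: "id \<in> (borel \<Otimes>\<^sub>M borel :: ('a \<times> 'b) measure) \<rightarrow>\<^sub>M borel"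
  proof (rule borel_measurableI)
    fix W :: "('a \<times> 'b) set" assume W: "open W"
    define C where "C = {(a, b). a \<in> BA \<and> b \<in> BB \<and> a \<times> b \<subseteq> W}"
    have "W = (\<Union>(a, b)\<in>C. a \<times> b)"
    proof
      show "W \<subseteq> (\<Union>(a, b)\<in>C. a \<times> b)"
      proof
        fix z assume "z \<in> W"
        then obtain x y where z: "z = (x, y)" by (cases z)
        obtain A B where AB: "open A" "open B" "x \<in> A" "y \<in> B" "A \<times> B \<subseteq> W"
          using open_prod_elim[OF W \<open>z \<in> W\<close>] z by (metis SigmaD1 SigmaD2)
        obtain a where a: "a \<in> BA" "x \<in> a" "a \<subseteq> A" using BA(3)[OF AB(1) AB(3)] by blast
        obtain b where b: "b \<in> BB" "y \<in> b" "b \<subseteq> B" using BB(3)[OF AB(2) AB(4)] by blast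
        have "(a, b) \<in> C" using a b AB(5) unfolding C_def by blast
        then show "z \<in> (\<Union>(a, b)\<in>C. a \<times> b)" using a b z by blast
      qed
    qed (auto simp: C_def)
    moreover have "countable C"
      by (rule countable_subset[of _ "BA \<times> BB"]) (auto simp: C_def BA BB)
    moreover have "a \<times> b \<in> sets (borel \<Otimes>\<^sub>M borel)" if "(a, b) \<in> C" for a b
      using that BA(2) BB(2) unfolding C_def by (auto intro!: pair_measureI)
    ultimately have "W \<in> sets (borel \<Otimes>\<^sub>M borel :: ('a \<times> 'b) measure)"
      by (metis (no_types, lifting) sets.countable_UN' case_prod_unfold image_subset_iff prod.collapse)
    then show "id -` W \<inter> space (borel \<Otimes>\<^sub>M borel) \<in> sets (borel \<Otimes>\<^sub>M borel)"
      by (simp add: space_pair_measure)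
  qed
  show ?thesis
  proof
    show "sets (borel \<Otimes>\<^sub>M borel) \<subseteq> sets (borel :: ('a \<times> 'b) measure)"
      using measurable_sets[OF 1] by (auto simp: space_pair_measure)
    show "sets (borel :: ('a \<times> 'b) measure) \<subseteq> sets (borel \<Otimes>\<^sub>M borel)"
      using measurable_sets[OF 2] by (auto simp: space_pair_measure)
  qed
qed

lemma meas_pmf_subprob:
  assumes "\<And>j. subprob_space (M j)" "\<And>j. sets (M j) = sets (borel :: 'a::topological_space measure)"
  shows "M \<in> measure_pmf p \<rightarrow>\<^sub>M subprob_algebra (borel :: 'a measure)"
proof -
  have "M \<in> count_space UNIV \<rightarrow>\<^sub>M subprob_algebra (borel :: 'a measure)"
    using assms by (auto simp: measurable_count_space_eq1 space_subprob_algebra)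
  then show ?thesis by (simp add: measurable_cong_sets)
qed

lemma avg_bind:
  fixes M :: "nat \<Rightarrow> 'a::topological_space measure"
  assumes n: "n > 0" and sp: "\<And>j. subprob_space (M j)" and st: "\<And>j. sets (M j) = sets borel"
  shows "avg_measure n M = measure_pmf (pmf_of_set {..<n}) \<bind> M"
proof -
  let ?p = "measure_pmf (pmf_of_set {..<n})"
  have meas: "M \<in> ?p \<rightarrow>\<^sub>M subprob_algebra borel" by (rule meas_pmf_subprob[OF sp st])
  have ne: "space ?p \<noteq> {}" by simp
  have sB: "sets (?p \<bind> M) = sets borel" using st by (simp add: sets_bind[OF _ ne])
  have spB: "space (?p \<bind> M) = UNIV" using sB by (metis sets_eq_imp_space_eq space_borel)
  have eq: "emeasure (?p \<bind> M) A = (\<Sum>j<n. emeasure (M j) A) / of_nat n" if "A \<in> sets borel" for A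
  proof -
    have "emeasure (?p \<bind> M) A = \<integral>\<^sup>+j. emeasure (M j) A \<partial>?p"
      by (rule emeasure_bind[OF ne meas that])
    also have "\<dots> = (\<Sum>j<n. emeasure (M j) A) / of_nat n"
      using n by (subst nn_integral_pmf_of_set) auto
    finally show ?thesis .
  qed
  have "avg_measure n M = measure_of UNIV (sets borel) (emeasure (?p \<bind> M))"
    unfolding avg_measure_def
    by (rule measure_of_eq) (auto simp: eq sets.sigma_sets_eq[of borel, simplified])
  also have "\<dots> = ?p \<bind> M"
    using measure_of_of_measure[of "?p \<bind> M"] by (simp add: sB spB)
  finally show ?thesis .
qed

lemma avg_props:
  fixes M :: "nat \<Rightarrow> 'a::topological_space measure"
  assumes n: "n > 0" and sp: "\<And>j. subprob_space (M j)" and st: "\<And>j. sets (M j) = sets borel"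
  shows "sets (avg_measure n M) = sets borel"
    and "A \<in> sets borel \<Longrightarrow> emeasure (avg_measure n M) A = (\<Sum>j<n. emeasure (M j) A) / of_nat n"
proof -
  let ?p = "measure_pmf (pmf_of_set {..<n})"
  have meas: "M \<in> ?p \<rightarrow>\<^sub>M subprob_algebra borel" by (rule meas_pmf_subprob[OF sp st])
  have ne: "space ?p \<noteq> {}" by simp
  show "sets (avg_measure n M) = sets borel" using st
    by (simp add: avg_bind[OF assms] sets_bind[OF _ ne])
  assume A: "A \<in> sets borel"
  have "emeasure (?p \<bind> M) A = \<integral>\<^sup>+j. emeasure (M j) A \<partial>?p"
    by (rule emeasure_bind[OF ne meas A])
  also have "\<dots> = (\<Sum>j<n. emeasure (M j) A) / of_nat n"
    using n by (subst nn_integral_pmf_of_set) auto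
  finally show "emeasure (avg_measure n M) A = (\<Sum>j<n. emeasure (M j) A) / of_nat n"
    by (simp add: avg_bind[OF assms])
qed

lemma avg_prob:
  fixes M :: "nat \<Rightarrow> 'a::topological_space measure"
  assumes n: "n > 0" and sp: "\<And>j. prob_space (M j)" and st: "\<And>j. sets (M j) = sets borel"
  shows "prob_space (avg_measure n M)"
proof -
  have sp': "\<And>j. subprob_space (M j)" using sp by (simp add: prob_space_imp_subprob_space)
  have sA: "space (avg_measure n M) = UNIV"
    using sets_eq_imp_space_eq[OF avg_props(1)[OF n sp' st]] by simp
  have "emeasure (M j) UNIV = 1" for j
    using prob_space.emeasure_space_1[OF sp[of j]] sets_eq_imp_space_eq[OF st[of j]] by simp
  then have "emeasure (avg_measure n M) UNIV = 1"
    using n by (simp add: avg_props(2)[OF n sp' st] ennreal_of_nat_eq_real_of_nat)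
  then show ?thesis by (intro prob_spaceI) (simp add: sA)
qed

lemma avg_integral:
  fixes M :: "nat \<Rightarrow> 'a::topological_space measure" and f :: "'a \<Rightarrow> real"
  assumes n: "n > 0" and sp: "\<And>j. prob_space (M j)" and st: "\<And>j. sets (M j) = sets borel"
    and f: "f \<in> borel_measurable borel" and B: "\<And>x. \<bar>f x\<bar> \<le> B"
  shows "integral\<^sup>L (avg_measure n M) f = (\<Sum>j<n. integral\<^sup>L (M j) f) / n"
proof -
  let ?p = "measure_pmf (pmf_of_set {..<n})"
  have sp': "\<And>j. subprob_space (M j)" using sp by (simp add: prob_space_imp_subprob_space)
  have meas: "M \<in> ?p \<rightarrow>\<^sub>M subprob_algebra borel" by (rule meas_pmf_subprob[OF sp' st])
  have "integral\<^sup>L (?p \<bind> M) f = \<integral>j. integral\<^sup>L (M j) f \<partial>?p"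
    by (rule integral_bind[OF f _ meas, where B'=1 and B=B])
       (auto simp: B prob_space.emeasure_space_1[OF sp] measure_pmf.finite_measure_axioms)
  also have "\<dots> = (\<Sum>j<n. integral\<^sup>L (M j) f) / n"
    using n by (subst integral_pmf_of_set) auto
  finally show ?thesis by (simp add: avg_bind[OF n sp' st])
qed


lemma cluster_point:
  fixes a :: "nat \<Rightarrow> 'x \<Rightarrow> real"
  assumes a: "\<And>n A. a n A \<in> {0..1}"
  obtains p where "\<And>A. p A \<in> {0..1}" "\<And>W N. open W \<Longrightarrow> p \<in> W \<Longrightarrow> \<exists>n\<ge>N. a n \<in> W"
proof -
  define K :: "('x \<Rightarrow> real) set" where "K = PiE UNIV (\<lambda>_. {0..1})"
  have "compactin (product_topology (\<lambda>_. euclidean) UNIV) K"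
    unfolding K_def by (subst compactin_PiE) auto
  then have cK: "compact K" by (simp add: euclidean_product_topology)
  define F where "F = filtermap a sequentially"
  have Fne: "F \<noteq> bot" by (simp add: F_def filtermap_bot_iff)
  have "eventually (\<lambda>x. x \<in> K) F" using a by (simp add: F_def eventually_filtermap K_def PiE_UNIV_domain)
  then obtain p where p: "p \<in> K" "inf (nhds p) F \<noteq> bot"
    using cK Fne unfolding compact_filter by blast
  show ?thesis
  proof
    show "p A \<in> {0..1}" for A using p(1) unfolding K_def PiE_UNIV_domain by blast
    fix W N assume W: "open W" "p \<in> W"
    show "\<exists>n\<ge>N. a n \<in> W"
    proof (rule ccontr)
      assume "\<not> ?thesis"
      then have ev: "eventually (\<lambda>x. x \<notin> W) F"
        unfolding F_def eventually_filtermap eventually_sequentially by (meson not_le_imp_less less_imp_le)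
      have "eventually (\<lambda>x. x \<in> W) (nhds p)" using W by (rule eventually_nhds_in_open)
      then have "eventually (\<lambda>x. False) (inf (nhds p) F)"
        using ev unfolding eventually_inf by blast
      then show False using p(2) by (simp add: eventually_False)
    qed
  qed
qed

lemma fa_invariant:
  fixes R :: "'a \<Rightarrow> 'a"
  obtains m :: "'a set \<Rightarrow> real" where "\<And>A. 0 \<le> m A" "\<And>A. m A \<le> 1" "m UNIV = 1"
    "\<And>A B. A \<inter> B = {} \<Longrightarrow> m (A \<union> B) = m A + m B" "\<And>A. m (R -` A) = m A"
proof -
  define x0 :: 'a where "x0 = undefined"
  define a where "a n A = (\<Sum>k<Suc n. indicator A ((R ^^ k) x0)) / real (Suc n)" for n A
  have a01: "a n A \<in> {0..1}" for n A
  proof -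
    have "(\<Sum>k<Suc n. indicator A ((R ^^ k) x0) :: real) \<le> (\<Sum>k<Suc n. 1)"
      by (intro sum_mono) (simp add: indicator_def)
    then show ?thesis by (simp add: a_def sum_nonneg)
  qed
  obtain p where p01: "\<And>A. p A \<in> {0..1}" and pc: "\<And>W N. open W \<Longrightarrow> p \<in> W \<Longrightarrow> \<exists>n\<ge>N. a n \<in> W"
    using cluster_point[of a] a01 by blast
  have close: "\<exists>n\<ge>N. \<bar>a n A1 - p A1\<bar> < e \<and> \<bar>a n A2 - p A2\<bar> < e \<and> \<bar>a n A3 - p A3\<bar> < e"
    if e: "e > 0" for N A1 A2 A3 e
  proof -
    define W where "W = {f. \<forall>i\<in>{A1, A2, A3}. f (id i) \<in> ball (p i) e}"
    have "open W" unfolding W_def by (rule product_topology_basis') auto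
    moreover have "p \<in> W" using e by (simp add: W_def)
    ultimately obtain n where "n \<ge> N" "a n \<in> W" using pc by blast
    then show ?thesis by (auto simp: W_def dist_real_def abs_minus_commute)
  qed
  have eq3: "x = y" if "\<And>e. e > 0 \<Longrightarrow> \<bar>x - y\<bar> < 3 * e" for x y :: real
  proof (rule ccontr)
    assume "x \<noteq> y"
    then have "\<bar>x - y\<bar> < 3 * (\<bar>x - y\<bar> / 3)" using that[of "\<bar>x - y\<bar> / 3"] by simp
    then show False by simp
  qed
  show ?thesis
  proof
    show "0 \<le> p A" "p A \<le> 1" for A using p01[of A] by auto
    show "p UNIV = 1"
    proof (rule eq3)
      fix e :: real assume "e > 0"
      then obtain n where "\<bar>a n UNIV - p UNIV\<bar> < e" using close[of e 0 UNIV UNIV UNIV] by blast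
      moreover have "a n UNIV = 1" by (simp add: a_def)
      ultimately show "\<bar>p UNIV - 1\<bar> < 3 * e" using \<open>e > 0\<close> by linarith
    qed
    show "p (A \<union> B) = p A + p B" if AB: "A \<inter> B = {}" for A B
    proof (rule eq3)
      fix e :: real assume "e > 0"
      then obtain n where n: "\<bar>a n (A \<union> B) - p (A \<union> B)\<bar> < e" "\<bar>a n A - p A\<bar> < e" "\<bar>a n B - p B\<bar> < e"
        using close[of e 0 "A \<union> B" A B] by blast
      have "indicator (A \<union> B) x = (indicator A x + indicator B x :: real)" for x
        using AB by (auto simp: indicator_def)
      then have "a n (A \<union> B) = a n A + a n B"
        unfolding a_def by (simp only: sum.distrib add_divide_distrib)
      then show "\<bar>p (A \<union> B) - (p A + p B)\<bar> < 3 * e" using n by linarith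
    qed
    show "p (R -` A) = p A" for A
    proof (rule eq3)
      fix e :: real assume e: "e > 0"
      obtain N :: nat where N: "inverse (Suc N) < e" using e reals_Archimedean by blast
      obtain n where n: "n \<ge> N" "\<bar>a n (R -` A) - p (R -` A)\<bar> < e" "\<bar>a n A - p A\<bar> < e"
        using close[OF e, of N "R -` A" A A] by blast
      define g where "g k = (indicator A ((R ^^ k) x0) :: real)" for k
      have "a n (R -` A) - a n A = (\<Sum>k<Suc n. g (Suc k) - g k) / real (Suc n)"
        unfolding a_def g_def by (simp add: sum_subtractf diff_divide_distrib indicator_vimage[abs_def] del: sum.lessThan_Suc)
      also have "\<dots> = (g (Suc n) - g 0) / real (Suc n)" by (simp only: sum_lessThan_telescope)
      finally have d: "a n (R -` A) - a n A = (g (Suc n) - g 0) / real (Suc n)" .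
      have "\<bar>g (Suc n) - g 0\<bar> \<le> 1" by (simp add: g_def indicator_def)
      then have "\<bar>a n (R -` A) - a n A\<bar> \<le> 1 / real (Suc n)" unfolding d by (simp add: abs_divide divide_right_mono)
      also have "\<dots> \<le> inverse (Suc N)" using n(1) by (simp add: field_simps)
      finally show "\<bar>p (R -` A) - p A\<bar> < 3 * e" using n N by linarith
    qed
  qed
qed

locale fa_meas =
  fixes m :: "'a::metric_space set \<Rightarrow> real"
  assumes nn: "\<And>A. 0 \<le> m A" and le1: "\<And>A. m A \<le> 1" and univ: "m UNIV = 1"
    and add: "\<And>A B. A \<inter> B = {} \<Longrightarrow> m (A \<union> B) = m A + m B"
    and cpt: "compact (UNIV :: 'a set)"
begin

lemma m_empty: "m {} = 0" using add[of "{}" "{}"] by simp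

lemma m_mono: "A \<subseteq> B \<Longrightarrow> m A \<le> m B"
  using add[of A "B - A"] nn[of "B - A"] by (simp add: Un_absorb1)

lemma m_subadd: "m (A \<union> B) \<le> m A + m B"
proof -
  have "m (A \<union> B) = m A + m (B - A)" using add[of A "B - A"] by simp
  also have "\<dots> \<le> m A + m B" using m_mono[of "B - A" B] by simp
  finally show ?thesis .
qed

definition rho :: "'a set \<Rightarrow> real" where
  "rho U = Sup {m K | K. closed K \<and> K \<subseteq> U}"

lemma rho_ne: "{m K | K. closed K \<and> K \<subseteq> U} \<noteq> {}" by auto

lemma rho_bdd: "bdd_above {m K | K. closed K \<and> K \<subseteq> U}"
  using le1 by (auto intro!: bdd_aboveI[of _ 1])

lemma rho_ge: "closed K \<Longrightarrow> K \<subseteq> U \<Longrightarrow> m K \<le> rho U"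
  unfolding rho_def by (rule cSup_upper[OF _ rho_bdd]) auto

lemma rho_le: "(\<And>K. closed K \<Longrightarrow> K \<subseteq> U \<Longrightarrow> m K \<le> c) \<Longrightarrow> rho U \<le> c"
  unfolding rho_def by (rule cSup_least[OF rho_ne]) auto

lemma rho_approx:
  assumes "e > 0" obtains K where "closed K" "K \<subseteq> U" "rho U - e < m K"
proof -
  have "rho U - e < Sup {m K | K. closed K \<and> K \<subseteq> U}" using assms by (simp add: rho_def)
  from less_cSupD[OF rho_ne this] that show ?thesis by blast
qed

lemma rho_nn: "0 \<le> rho U" using rho_ge[of "{}" U] m_empty by simp

lemma rho_le1: "rho U \<le> 1" by (rule rho_le) (rule le1)

lemma rho_mono: "U \<subseteq> V \<Longrightarrow> rho U \<le> rho V"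
  by (rule rho_le) (auto intro: rho_ge)

definition os :: "'a set \<Rightarrow> real" where
  "os A = Inf {rho U | U. open U \<and> A \<subseteq> U}"

lemma os_ne: "{rho U | U. open U \<and> A \<subseteq> U} \<noteq> {}" by auto

lemma os_bdd: "bdd_below {rho U | U. open U \<and> A \<subseteq> U}"
  using rho_nn by (auto intro!: bdd_belowI[of _ 0])

lemma os_le: "open U \<Longrightarrow> A \<subseteq> U \<Longrightarrow> os A \<le> rho U"
  unfolding os_def by (rule cInf_lower[OF _ os_bdd]) auto

lemma os_ge: "(\<And>U. open U \<Longrightarrow> A \<subseteq> U \<Longrightarrow> c \<le> rho U) \<Longrightarrow> c \<le> os A"
  unfolding os_def by (rule cInf_greatest[OF os_ne]) auto

lemma os_approx:
  assumes "e > 0" obtains U where "open U" "A \<subseteq> U" "rho U < os A + e"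
proof -
  have "Inf {rho U | U. open U \<and> A \<subseteq> U} < os A + e" using assms by (simp add: os_def)
  from cInf_lessD[OF os_ne this] that show ?thesis by blast
qed

lemma os_nn: "0 \<le> os A" by (rule os_ge) (rule rho_nn)

lemma os_le1: "os A \<le> 1" using os_le[of UNIV A] rho_le1[of UNIV] by simp

lemma os_mono: "A \<subseteq> B \<Longrightarrow> os A \<le> os B"
  by (rule os_ge) (auto intro: os_le)

lemma os_open: "open U \<Longrightarrow> os U = rho U"
  using os_le[of U U] os_ge[of U "rho U"] rho_mono by (simp add: order_antisym)

lemma os_empty: "os {} = 0"
proof -
  have "rho {} \<le> 0" by (rule rho_le) (simp add: m_empty)
  then show ?thesis using os_le[of "{}" "{}"] os_nn[of "{}"] by simp
qed

lemma os_univ: "os UNIV = 1"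
  using os_open[of UNIV] rho_ge[of UNIV UNIV] rho_le1[of UNIV] univ by simp

lemma split_closed:
  assumes K: "closed K" "K \<subseteq> U \<union> V" and UV: "open U" "open V"
  shows "m K \<le> rho U + rho V"
proof (cases "U = UNIV \<or> V = UNIV")
  case True
  then show ?thesis
  proof
    assume "U = UNIV" then show ?thesis using rho_ge[OF K(1), of U] rho_nn[of V] by simp
  next
    assume "V = UNIV" then show ?thesis using rho_ge[OF K(1), of V] rho_nn[of U] by simp
  qed
next
  case False
  then have neU: "- U \<noteq> {}" and neV: "- V \<noteq> {}" by auto
  define K1 where "K1 = K \<inter> {x. infdist x (- V) \<le> infdist x (- U)}"
  define K2 where "K2 = K \<inter> {x. infdist x (- U) \<le> infdist x (- V)}"
  have c1: "closed K1" unfolding K1_def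
    by (intro closed_Int K(1) closed_Collect_le continuous_intros)
  have c2: "closed K2" unfolding K2_def
    by (intro closed_Int K(1) closed_Collect_le continuous_intros)
  have s1: "K1 \<subseteq> U"
  proof
    fix x assume x: "x \<in> K1"
    show "x \<in> U"
    proof (rule ccontr)
      assume "x \<notin> U"
      then have "infdist x (- U) = 0" by (simp add: infdist_zero)
      then have "infdist x (- V) = 0" using x infdist_nonneg[of x "- V"] by (simp add: K1_def)
      then have "x \<in> closure (- V)" using neV by (simp add: in_closure_iff_infdist_zero)
      then have "x \<in> - V" using UV(2) by (simp add: closed_Compl)
      then show False using \<open>x \<notin> U\<close> x K(2) unfolding K1_def by auto
    qed
  qed
  have s2: "K2 \<subseteq> V"
  proof
    fix x assume x: "x \<in> K2"
    show "x \<in> V"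
    proof (rule ccontr)
      assume "x \<notin> V"
      then have "infdist x (- V) = 0" by (simp add: infdist_zero)
      then have "infdist x (- U) = 0" using x infdist_nonneg[of x "- U"] by (simp add: K2_def)
      then have "x \<in> closure (- U)" using neU by (simp add: in_closure_iff_infdist_zero)
      then have "x \<in> - U" using UV(1) by (simp add: closed_Compl)
      then show False using \<open>x \<notin> V\<close> x K(2) unfolding K2_def by auto
    qed
  qed
  have "K = K1 \<union> K2" unfolding K1_def K2_def by auto
  then have "m K \<le> m K1 + m K2" using m_subadd by simp
  also have "\<dots> \<le> rho U + rho V" using rho_ge[OF c1 s1] rho_ge[OF c2 s2] by simp
  finally show ?thesis .
qed

lemma finite_cover:
  fixes N :: nat
  assumes "closed K" "K \<subseteq> (\<Union>i<N. U i)" "\<And>i. open (U i)"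
  shows "m K \<le> (\<Sum>i<N. rho (U i))"
  using assms(1,2)
proof (induction N arbitrary: K)
  case 0
  then show ?case using m_empty by simp
next
  case (Suc N)
  have o: "open (\<Union>i<N. U i)" using assms(3) by auto
  have "K \<subseteq> (\<Union>i<N. U i) \<union> U N" using Suc.prems(2) by (auto simp: lessThan_Suc)
  then have "m K \<le> rho (\<Union>i<N. U i) + rho (U N)"
    by (rule split_closed[OF Suc.prems(1) _ o assms(3)])
  moreover have "rho (\<Union>i<N. U i) \<le> (\<Sum>i<N. rho (U i))"
    by (rule rho_le) (rule Suc.IH)
  ultimately show ?case by simp
qed

lemma countable_cover:
  fixes U :: "nat \<Rightarrow> 'a set"
  assumes "closed K" "K \<subseteq> (\<Union>i. U i)" "\<And>i. open (U i)"
  obtains N where "m K \<le> (\<Sum>i<N. rho (U i))"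
proof -
  have "compact K" using compact_Int_closed[OF cpt assms(1)] by simp
  then obtain C where C: "C \<subseteq> UNIV" "finite C" "K \<subseteq> (\<Union>i\<in>C. U i)"
    using compactE_image[of K UNIV U] assms(2,3) by blast
  define N where "N = Suc (Max (insert 0 C))"
  have "C \<subseteq> {..<N}" using C(2) by (auto simp: N_def less_Suc_eq_le)
  then have "K \<subseteq> (\<Union>i<N. U i)" using C(3) by blast
  from finite_cover[OF assms(1) this assms(3)] show ?thesis by (rule that)
qed

lemma os_subadd: "os (A \<union> B) \<le> os A + os B"
proof (rule field_le_epsilon)
  fix e :: real assume e: "e > 0"
  obtain U where U: "open U" "A \<subseteq> U" "rho U < os A + e / 2" using os_approx[of "e/2" A] e by auto
  obtain V where V: "open V" "B \<subseteq> V" "rho V < os B + e / 2" using os_approx[of "e/2" B] e by auto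
  have "os (A \<union> B) \<le> rho (U \<union> V)" using U V by (intro os_le) auto
  also have "\<dots> \<le> rho U + rho V" by (rule rho_le) (rule split_closed, auto simp: U V)
  finally show "os (A \<union> B) \<le> os A + os B + e" using U V by simp
qed

lemma geom_sum: "(\<Sum>i<N. e / 2 ^ Suc i) = e - e / 2 ^ N" for e :: real
  by (induction N) (auto simp: field_simps)

lemma os_csub:
  fixes A :: "nat \<Rightarrow> 'a set"
  shows "ennreal (os (\<Union>i. A i)) \<le> (\<Sum>i. ennreal (os (A i)))"
proof (rule ennreal_le_epsilon)
  fix e :: real
  assume s: "(\<Sum>i. ennreal (os (A i))) < top" and e: "0 < e"
  obtain r where r: "(\<Sum>i. ennreal (os (A i))) = ennreal r" "0 \<le> r"
    using s by (cases "(\<Sum>i. ennreal (os (A i)))" rule: ennreal_cases) auto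
  have "\<forall>i. \<exists>U. open U \<and> A i \<subseteq> U \<and> rho U < os (A i) + e / 2 ^ Suc i"
  proof
    fix i
    have "e / 2 ^ Suc i > 0" using e by simp
    then show "\<exists>U. open U \<and> A i \<subseteq> U \<and> rho U < os (A i) + e / 2 ^ Suc i"
      using os_approx by metis
  qed
  then obtain U where U: "\<And>i. open (U i)" "\<And>i. A i \<subseteq> U i" "\<And>i. rho (U i) < os (A i) + e / 2 ^ Suc i"
    by metis
  have partial: "(\<Sum>i<N. os (A i)) \<le> r" for N
  proof -
    have "ennreal (\<Sum>i<N. os (A i)) = (\<Sum>i<N. ennreal (os (A i)))"
      by (simp add: os_nn)
    also have "\<dots> \<le> (\<Sum>i. ennreal (os (A i)))" by (rule sum_le_suminf) auto
    finally show ?thesis using r by (simp add: ennreal_le_iff)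
  qed
  have "rho (\<Union>i. U i) \<le> r + e"
  proof (rule rho_le)
    fix K assume K: "closed K" "K \<subseteq> (\<Union>i. U i)"
    obtain N where N: "m K \<le> (\<Sum>i<N. rho (U i))" using countable_cover[OF K U(1)] by blast
    also have "\<dots> \<le> (\<Sum>i<N. os (A i) + e / 2 ^ Suc i)" by (intro sum_mono less_imp_le U(3))
    also have "\<dots> = (\<Sum>i<N. os (A i)) + (e - e / 2 ^ N)" by (simp only: sum.distrib geom_sum)
    also have "\<dots> \<le> r + e"
    proof -
      have "0 \<le> e / 2 ^ N" using e by simp
      then show ?thesis using partial[of N] by linarith
    qed
    finally show "m K \<le> r + e" .
  qed
  moreover have "os (\<Union>i. A i) \<le> rho (\<Union>i. U i)" using U by (intro os_le) auto
  ultimately have "os (\<Union>i. A i) \<le> r + e" by simp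
  then have "ennreal (os (\<Union>i. A i)) \<le> ennreal (r + e)" by (rule ennreal_leI)
  then show "ennreal (os (\<Union>i. A i)) \<le> (\<Sum>i. ennreal (os (A i))) + ennreal e"
    using r e by (simp add: ennreal_plus)
qed

lemma os_cara:
  assumes U: "open U"
  shows "os (A \<inter> U) + os (A - U) = os A"
proof (rule order_antisym)
  show "os A \<le> os (A \<inter> U) + os (A - U)"
    using os_subadd[of "A \<inter> U" "A - U"] by (simp add: Int_Diff_Un)
  show "os (A \<inter> U) + os (A - U) \<le> os A"
  proof (rule field_le_epsilon)
    fix e2 :: real assume e2: "e2 > 0"
    define e where "e = e2 / 2"
    have e: "e > 0" using e2 by (simp add: e_def)
    have "os (A \<inter> U) + os (A - U) - 2 * e \<le> os A"
    proof (rule os_ge)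
      fix V assume V: "open V" "A \<subseteq> V"
      obtain K where K: "closed K" "K \<subseteq> V \<inter> U" "rho (V \<inter> U) - e < m K"
        using rho_approx[OF e] by blast
      have o1: "os (A \<inter> U) \<le> rho (V \<inter> U)" using V U by (intro os_le) auto
      have oVK: "open (V - K)" using V K by (intro open_Diff)
      obtain K' where K': "closed K'" "K' \<subseteq> V - K" "rho (V - K) - e < m K'"
        using rho_approx[OF e] by blast
      have o2: "os (A - U) \<le> rho (V - K)" using V K oVK by (intro os_le) auto
      have "m (K \<union> K') = m K + m K'" using K' by (intro add) auto
      moreover have "m (K \<union> K') \<le> rho V" using K K' by (intro rho_ge) auto
      ultimately show "os (A \<inter> U) + os (A - U) - 2 * e \<le> rho V" using o1 o2 K K' by simp
    qed
    then show "os (A \<inter> U) + os (A - U) \<le> os A + e2" by (simp add: e_def)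
  qed
qed

definition mu :: "'a measure" where
  "mu = measure_of UNIV (sets borel) (\<lambda>A. ennreal (os A))"

lemma mu_sets: "sets mu = sets borel"
  unfolding mu_def by (simp add: sets_measure_of_conv sets.sigma_sets_eq[of borel, simplified])

lemma mu_emeasure:
  assumes A: "A \<in> sets borel"
  shows "emeasure mu A = ennreal (os A)"
proof -
  define f where "f A = ennreal (os A)" for A
  interpret P: sigma_algebra "UNIV :: 'a set" "Pow UNIV" by (rule sigma_algebra_Pow)
  have oms: "outer_measure_space (Pow UNIV) f"
    unfolding outer_measure_space_def positive_def increasing_def countably_subadditive_def f_def
    by (auto simp: os_empty intro!: ennreal_leI os_mono os_csub)
  define L where "L = lambda_system UNIV (Pow UNIV) f"
  have ms: "measure_space UNIV L f" unfolding L_def by (rule P.caratheodory_lemma[OF oms])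
  then have saL: "sigma_algebra UNIV L" by (simp add: measure_space_def)
  have "{S. open S} \<subseteq> L"
  proof
    fix U :: "'a set" assume "U \<in> {S. open S}"
    then have U: "open U" by simp
    have "f (U \<inter> x) + f ((UNIV - U) \<inter> x) = f x" for x
    proof -
      have "(UNIV - U) \<inter> x = x - U" by auto
      then show ?thesis using os_cara[OF U, of x]
        by (simp add: f_def Int_commute os_nn flip: ennreal_plus)
    qed
    then show "U \<in> L" by (simp add: L_def lambda_system_def)
  qed
  then have "sets borel \<subseteq> L" unfolding sets_borel by (rule sigma_algebra.sigma_sets_subset[OF saL])
  then have ms2: "measure_space UNIV (sets borel) f"
    using measure_down[OF ms _] sets.sigma_algebra_axioms[of borel] by simp
  have fe: "(\<lambda>A. ennreal (os A)) = f" by (rule ext) (simp add: f_def)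
  show ?thesis unfolding mu_def fe
    using ms2 A sets.sigma_algebra_axioms[of borel]
    by (subst emeasure_measure_of_sigma) (auto simp: measure_space_def f_def)
qed

lemma mu_prob: "prob_space mu"
proof -
  have sp: "space mu = UNIV" using sets_eq_imp_space_eq[OF mu_sets] by simp
  show ?thesis by (rule prob_spaceI) (simp add: sp mu_emeasure os_univ)
qed

lemma mu_invariant:
  assumes hom: "homeomorphism UNIV UNIV R R'" and inv: "\<And>A. m (R -` A) = m A"
  shows "distr mu borel R = mu"
proof -
  have RR': "R (R' y) = y" "R' (R y) = y" for y using hom by (auto simp: homeomorphism_def)
  have cR: "continuous_on UNIV R" and cR': "continuous_on UNIV R'"
    using hom by (auto simp: homeomorphism_def)
  have v1: "R -` (R' -` X) = X" for X using RR' by auto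
  have v2: "R' -` (R -` X) = X" for X using RR' by auto
  have rho_inv: "rho (R -` U) = rho U" for U
  proof (rule order_antisym)
    show "rho (R -` U) \<le> rho U"
    proof (rule rho_le)
      fix K assume K: "closed K" "K \<subseteq> R -` U"
      have "closed (R' -` K)" using K(1) cR' by (rule closed_vimage)
      moreover have "R' -` K \<subseteq> U" using K(2) RR' by auto
      ultimately have "m (R' -` K) \<le> rho U" by (rule rho_ge)
      then show "m K \<le> rho U" using inv[of "R' -` K"] by (simp add: v1)
    qed
    show "rho U \<le> rho (R -` U)"
    proof (rule rho_le)
      fix K assume K: "closed K" "K \<subseteq> U"
      have "closed (R -` K)" using K(1) cR by (rule closed_vimage)
      moreover have "R -` K \<subseteq> R -` U" using K(2) by auto
      ultimately have "m (R -` K) \<le> rho (R -` U)" by (rule rho_ge)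
      then show "m K \<le> rho (R -` U)" using inv[of K] by simp
    qed
  qed
  have os_inv: "os (R -` A) = os A" for A
  proof (rule order_antisym)
    show "os (R -` A) \<le> os A"
    proof (rule os_ge)
      fix U assume U: "open U" "A \<subseteq> U"
      have "open (R -` U)" using U(1) cR by (rule open_vimage)
      then have "os (R -` A) \<le> rho (R -` U)" using U(2) by (intro os_le) auto
      then show "os (R -` A) \<le> rho U" by (simp add: rho_inv)
    qed
    show "os A \<le> os (R -` A)"
    proof (rule os_ge)
      fix V assume V: "open V" "R -` A \<subseteq> V"
      have "open (R' -` V)" using V(1) cR' by (rule open_vimage)
      moreover have "A \<subseteq> R' -` V" using V(2) RR' by auto
      ultimately have "os A \<le> rho (R' -` V)" by (rule os_le)
      also have "\<dots> = rho V" using rho_inv[of "R' -` V"] by (simp add: v1)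
      finally show "os A \<le> rho V" .
    qed
  qed
  have mR: "R \<in> borel \<rightarrow>\<^sub>M borel" using cR by (rule borel_measurable_continuous_onI)
  show ?thesis
  proof (rule measure_eqI)
    show "sets (distr mu borel R) = sets mu" by (simp add: mu_sets)
    fix A assume "A \<in> sets (distr mu borel R)"
    then have A: "A \<in> sets borel" by simp
    have "emeasure (distr mu borel R) A = emeasure mu (R -` A \<inter> space mu)"
      using mR A by (intro emeasure_distr) (auto simp: measurable_cong_sets[OF mu_sets refl])
    also have "\<dots> = ennreal (os (R -` A))"
      using sets_eq_imp_space_eq[OF mu_sets] measurable_sets_borel[OF mR A]
      by (simp add: mu_emeasure)
    also have "\<dots> = emeasure mu A" using A by (simp add: os_inv mu_emeasure)
    finally show "emeasure (distr mu borel R) A = emeasure mu A" .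
  qed
qed

end

lemma krylov_bogolyubov:
  assumes cpt: "compact (UNIV :: 'a::metric_space set)" and hom: "homeomorphism UNIV UNIV R R'"
  shows "inv_measures (R :: 'a \<Rightarrow> 'a) \<noteq> {}"
proof -
  obtain m :: "'a set \<Rightarrow> real" where m: "\<And>A. 0 \<le> m A" "\<And>A. m A \<le> 1" "m UNIV = 1"
    "\<And>A B. A \<inter> B = {} \<Longrightarrow> m (A \<union> B) = m A + m B" "\<And>A. m (R -` A) = m A"
    using fa_invariant[of R] by blast
  interpret fa_meas m using m cpt by unfold_locales auto
  have "mu \<in> inv_measures R"
    unfolding inv_measures_def using mu_prob mu_sets mu_invariant[OF hom m(5)] by simp
  then show ?thesis by blast
qed


lemma sum_shift_periodic:
  fixes f :: "nat \<Rightarrow> 'b::comm_monoid_add"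
  assumes "f n = f 0"
  shows "(\<Sum>j<n. f (Suc j)) = (\<Sum>j<n. f j)"
proof (cases n)
  case 0 then show ?thesis by simp
next
  case (Suc k)
  have "(\<Sum>j<Suc k. f (Suc j)) = (\<Sum>j<k. f (Suc j)) + f (Suc k)" by simp
  also have "\<dots> = f 0 + (\<Sum>j<k. f (Suc j))" using assms Suc by (simp add: add.commute)
  also have "\<dots> = (\<Sum>j<Suc k. f j)" by (simp only: sum.lessThan_Suc_shift)
  finally show ?thesis using Suc by simp
qed

lemma homeo_funpow:
  fixes f :: "'a::topological_space \<Rightarrow> 'a"
  assumes "homeomorphism UNIV UNIV f g"
  shows "homeomorphism UNIV UNIV (f ^^ n) (g ^^ n)"
proof (induction n)
  case 0
  have "f ^^ 0 = (\<lambda>x. x)" "g ^^ 0 = (\<lambda>x. x)" by auto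
  then show ?case using homeomorphism_ident[of "UNIV :: 'a set"] by simp
next
  case (Suc n)
  have "homeomorphism UNIV UNIV (f ^^ n \<circ> f) (g \<circ> g ^^ n)"
    by (rule homeomorphism_compose[OF assms Suc.IH])
  moreover have "f ^^ Suc n = f ^^ n \<circ> f" by (rule funpow_Suc_right)
  moreover have "g ^^ Suc n = g \<circ> g ^^ n" by simp
  ultimately show ?case by metis
qed

lemma homeo_cont: "homeomorphism UNIV UNIV f g \<Longrightarrow> continuous_on UNIV f"
  by (simp add: homeomorphism_def)

lemma homeo_inj: "homeomorphism UNIV UNIV f g \<Longrightarrow> f x = f y \<Longrightarrow> x = y"
  by (metis UNIV_I homeomorphism_apply1)

lemma map_prod_funpow: fixes f :: "'a \<Rightarrow> 'a" and g :: "'b \<Rightarrow> 'b"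
  shows "map_prod f g ^^ n = map_prod (f ^^ n) (g ^^ n)"
  by (induction n) (auto simp: fun_eq_iff)

lemma cont_map_prod:
  assumes "continuous_on UNIV f" "continuous_on UNIV g"
  shows "continuous_on UNIV (map_prod f g)"
proof -
  have "map_prod f g = (\<lambda>z. (f (fst z), g (snd z)))" by (auto simp: fun_eq_iff)
  moreover have "continuous_on UNIV (\<lambda>z. (f (fst z), g (snd z)))"
    using assms by (intro continuous_intros continuous_on_compose2[OF assms(1)]
                      continuous_on_compose2[OF assms(2)]) auto
  ultimately show ?thesis by simp
qed

lemma pair_return_distr:
  fixes \<mu> :: "'a::topological_space measure" and y0 :: "'b::topological_space"
  assumes st: "sets \<mu> = sets borel" and fin: "finite_measure \<mu>"
  shows "\<mu> \<Otimes>\<^sub>M return borel y0 = distr \<mu> (borel \<Otimes>\<^sub>M borel) (\<lambda>x. (x, y0))"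
proof (rule measure_eqI)
  have sp: "space \<mu> = UNIV" using sets_eq_imp_space_eq[OF st] by simp
  interpret R: prob_space "return borel y0" by (rule prob_space_return) simp
  show "sets (\<mu> \<Otimes>\<^sub>M return borel y0) = sets (distr \<mu> (borel \<Otimes>\<^sub>M borel) (\<lambda>x. (x, y0)))"
    using st by simp
  fix X assume X: "X \<in> sets (\<mu> \<Otimes>\<^sub>M return borel y0)"
  then have X': "X \<in> sets (borel \<Otimes>\<^sub>M borel)" using st by simp
  have mP: "(\<lambda>x. (x, y0)) \<in> \<mu> \<rightarrow>\<^sub>M (borel \<Otimes>\<^sub>M borel)"
    using st by (auto intro!: measurable_Pair simp: measurable_cong_sets[OF st refl])
  have "emeasure (\<mu> \<Otimes>\<^sub>M return borel y0) X = \<integral>\<^sup>+x. \<integral>\<^sup>+y. indicator X (x, y) \<partial>return borel y0 \<partial>\<mu>"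
    using X by (rule R.emeasure_pair_measure)
  also have "\<dots> = \<integral>\<^sup>+x. indicator X (x, y0) \<partial>\<mu>"
  proof (rule nn_integral_cong)
    fix x
    have "(\<lambda>y. indicator X (x, y) :: ennreal) \<in> borel_measurable borel"
      using X' by measurable
    then show "(\<integral>\<^sup>+y. indicator X (x, y) \<partial>return borel y0) = indicator X (x, y0)"
      by (intro nn_integral_return) auto
  qed
  also have "\<dots> = emeasure \<mu> ((\<lambda>x. (x, y0)) -` X \<inter> space \<mu>)"
  proof -
    have "(\<lambda>x. indicator X (x, y0) :: ennreal) = indicator ((\<lambda>x. (x, y0)) -` X \<inter> space \<mu>)"
      by (auto simp: sp indicator_def fun_eq_iff)
    then show ?thesis using measurable_sets[OF mP X'] by simp
  qed
  also have "\<dots> = emeasure (distr \<mu> (borel \<Otimes>\<^sub>M borel) (\<lambda>x. (x, y0))) X"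
    using mP X' by (simp add: emeasure_distr)
  finally show "emeasure (\<mu> \<Otimes>\<^sub>M return borel y0) X = emeasure (distr \<mu> (borel \<Otimes>\<^sub>M borel) (\<lambda>x. (x, y0))) X" .
qed

lemma ennreal_cancel_aux:
  fixes x :: ennreal and r :: real and n :: nat
  assumes "r > 0" "n > 0"
  shows "ennreal (1 / r) * (of_nat n * ennreal r * x) / of_nat n = x"
proof -
  have "ennreal (1 / r) * (of_nat n * ennreal r * x) = x * of_nat n * (ennreal (1/r) * ennreal r)"
    by (simp add: ac_simps)
  also have "ennreal (1/r) * ennreal r = 1" using assms by (simp flip: ennreal_mult)
  finally have "ennreal (1 / r) * (of_nat n * ennreal r * x) = x * of_nat n" by simp
  moreover have "x * of_nat n / of_nat n = x"
    by (rule mult_divide_eq_ennreal) (use assms in auto)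
  ultimately show ?thesis by simp
qed
lemma div_times_n: "(x::ennreal) / of_nat n * of_nat n = x" if "n > 0"
proof -
  have "x / of_nat n * of_nat n = x * of_nat n / of_nat n" by (simp add: ennreal_divide_times ennreal_times_divide)
  also have "\<dots> = x" by (rule mult_divide_eq_ennreal) (use that in auto)
  finally show ?thesis .
qed

locale setup2 =
  fixes T :: "'a::metric_space \<Rightarrow> 'a" and S :: "'b::metric_space \<Rightarrow> 'b" and y0 :: 'b and s0 :: nat
    and T' S'
  assumes cA: "compact (UNIV :: 'a set)" and cB: "compact (UNIV :: 'b set)"
    and hT: "homeomorphism UNIV UNIV T T'" and hS: "homeomorphism UNIV UNIV S S'"
    and s0: "s0 > 0" and per: "(S ^^ s0) y0 = y0"
begin

definition e :: "nat \<Rightarrow> 'a \<Rightarrow> 'a \<times> 'b" where "e j x = ((T ^^ j) x, (S ^^ j) y0)"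

definition nu :: "'b measure" where "nu = avg_measure s0 (\<lambda>j. return borel ((S ^^ j) y0))"

definition avgE :: "'a measure \<Rightarrow> ('a \<times> 'b) measure" where
  "avgE \<mu> = avg_measure s0 (\<lambda>j. distr \<mu> borel (e j))"

lemma contT: "continuous_on UNIV (T ^^ j)" using homeo_cont[OF homeo_funpow[OF hT]] .
lemma contS: "continuous_on UNIV (S ^^ j)" using homeo_cont[OF homeo_funpow[OF hS]] .

lemma mT[measurable]: "(T ^^ j) \<in> borel \<rightarrow>\<^sub>M borel" by (rule borel_measurable_continuous_onI[OF contT])

lemma mPj: "(map_prod T S ^^ j) \<in> borel \<rightarrow>\<^sub>M borel"
  unfolding map_prod_funpow by (intro borel_measurable_continuous_onI cont_map_prod contT contS)

lemma mP[measurable]: "map_prod T S \<in> borel \<rightarrow>\<^sub>M borel"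
  using mPj[of 1] by simp

lemma prod_sets: "sets (borel \<Otimes>\<^sub>M borel) = sets (borel :: ('a \<times> 'b) measure)"
  by (rule borel_prod_compact[OF cA cB])

lemma me[measurable]: "e j \<in> borel \<rightarrow>\<^sub>M borel"
proof -
  have "continuous_on UNIV (e j)" unfolding e_def by (intro continuous_intros contT)
  then show ?thesis by (rule borel_measurable_continuous_onI)
qed

lemma msnd[measurable]: "(snd :: 'a \<times> 'b \<Rightarrow> 'b) \<in> borel \<rightarrow>\<^sub>M borel"
  by (intro borel_measurable_continuous_onI continuous_intros)

lemma inv_space: "\<mu> \<in> inv_measures R \<Longrightarrow> space \<mu> = UNIV"
  unfolding inv_measures_def using sets_eq_imp_space_eq[of \<mu> borel] by auto

lemma rhs_eq:
  assumes \<mu>: "\<mu> \<in> inv_measures (T ^^ s0)"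
  shows "distr (\<mu> \<Otimes>\<^sub>M return borel y0) borel ((map_prod T S) ^^ j) = distr \<mu> borel (e j)"
proof -
  have st: "sets \<mu> = sets borel" and ps: "prob_space \<mu>" using \<mu> by (auto simp: inv_measures_def)
  have fm: "finite_measure \<mu>" using ps by (simp add: prob_space_def)
  have mP2: "(map_prod T S ^^ j) \<in> (borel \<Otimes>\<^sub>M borel) \<rightarrow>\<^sub>M borel"
    using mPj[of j] by (simp add: measurable_cong_sets[OF prod_sets refl])
  have mPair: "(\<lambda>x. (x, y0)) \<in> \<mu> \<rightarrow>\<^sub>M (borel \<Otimes>\<^sub>M borel)"
    by (auto intro!: measurable_Pair simp: measurable_cong_sets[OF st refl])
  have "distr (\<mu> \<Otimes>\<^sub>M return borel y0) borel ((map_prod T S) ^^ j)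
      = distr (distr \<mu> (borel \<Otimes>\<^sub>M borel) (\<lambda>x. (x, y0))) borel ((map_prod T S) ^^ j)"
    by (simp add: pair_return_distr[OF st fm])
  also have "\<dots> = distr \<mu> borel ((map_prod T S ^^ j) \<circ> (\<lambda>x. (x, y0)))"
    by (rule distr_distr[OF mP2 mPair])
  also have "(map_prod T S ^^ j) \<circ> (\<lambda>x. (x, y0)) = e j"
    by (auto simp: e_def map_prod_funpow fun_eq_iff)
  finally show ?thesis .
qed

lemma nu_props:
  shows "sets nu = sets borel" "prob_space nu"
    and "A \<in> sets borel \<Longrightarrow> emeasure nu A = (\<Sum>j<s0. indicator A ((S ^^ j) y0)) / of_nat s0"
proof -
  have sp: "\<And>j. prob_space (return borel ((S ^^ j) y0))" by (rule prob_space_return) simp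
  then have ssp: "\<And>j. subprob_space (return borel ((S ^^ j) y0))" by (simp add: prob_space_imp_subprob_space)
  have st: "\<And>j. sets (return borel ((S ^^ j) y0)) = sets borel" by simp
  show "sets nu = sets borel" unfolding nu_def by (rule avg_props(1)[OF s0 ssp st])
  show "prob_space nu" unfolding nu_def by (rule avg_prob[OF s0 sp st])
  assume A: "A \<in> sets borel"
  show "emeasure nu A = (\<Sum>j<s0. indicator A ((S ^^ j) y0)) / of_nat s0"
    unfolding nu_def using A by (simp add: avg_props(2)[OF s0 ssp st])
qed

lemma distr_e_props:
  assumes \<mu>: "\<mu> \<in> inv_measures (T ^^ s0)"
  shows "prob_space (distr \<mu> borel (e j))" "sets (distr \<mu> borel (e j)) = sets borel"
proof -
  have st: "sets \<mu> = sets borel" and ps: "prob_space \<mu>" using \<mu> by (auto simp: inv_measures_def)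
  show "prob_space (distr \<mu> borel (e j))"
    by (rule prob_space.prob_space_distr[OF ps]) (simp add: measurable_cong_sets[OF st refl])
  show "sets (distr \<mu> borel (e j)) = sets borel" by simp
qed

lemma avgE_props:
  assumes \<mu>: "\<mu> \<in> inv_measures (T ^^ s0)"
  shows "sets (avgE \<mu>) = sets borel" "prob_space (avgE \<mu>)"
    and "A \<in> sets borel \<Longrightarrow> emeasure (avgE \<mu>) A = (\<Sum>j<s0. emeasure \<mu> (e j -` A)) / of_nat s0"
proof -
  have st: "sets \<mu> = sets borel" using \<mu> by (auto simp: inv_measures_def)
  have sp: "space \<mu> = UNIV" using inv_space[OF \<mu>] .
  note dp = distr_e_props[OF \<mu>]
  have ssp: "\<And>j. subprob_space (distr \<mu> borel (e j))" using dp(1) by (simp add: prob_space_imp_subprob_space)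
  show "sets (avgE \<mu>) = sets borel" unfolding avgE_def by (rule avg_props(1)[OF s0 ssp dp(2)])
  show "prob_space (avgE \<mu>)" unfolding avgE_def by (rule avg_prob[OF s0 dp(1) dp(2)])
  assume A: "A \<in> sets borel"
  have "emeasure (distr \<mu> borel (e j)) A = emeasure \<mu> (e j -` A)" for j
    using A by (subst emeasure_distr) (auto simp: sp measurable_cong_sets[OF st refl])
  then show "emeasure (avgE \<mu>) A = (\<Sum>j<s0. emeasure \<mu> (e j -` A)) / of_nat s0"
    unfolding avgE_def using A by (simp add: avg_props(2)[OF s0 ssp dp(2)])
qed

lemma sup_dir:
  assumes \<mu>: "\<mu> \<in> inv_measures (T ^^ s0)"
  shows "avgE \<mu> \<in> inv_measures (map_prod T S)" "distr (avgE \<mu>) borel snd = nu"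
proof -
  have st: "sets \<mu> = sets borel" and ps: "prob_space \<mu>" and inv: "distr \<mu> borel (T ^^ s0) = \<mu>"
    using \<mu> by (auto simp: inv_measures_def)
  have sp: "space \<mu> = UNIV" using inv_space[OF \<mu>] .
  note aP = avgE_props[OF \<mu>]
  have spA: "space (avgE \<mu>) = UNIV" using sets_eq_imp_space_eq[OF aP(1)] by simp
  have muR: "emeasure \<mu> ((T ^^ s0) -` B) = emeasure \<mu> B" if B: "B \<in> sets borel" for B
  proof -
    have "emeasure \<mu> B = emeasure (distr \<mu> borel (T ^^ s0)) B" using inv by simp
    also have "\<dots> = emeasure \<mu> ((T ^^ s0) -` B)"
      using B by (subst emeasure_distr) (auto simp: sp measurable_cong_sets[OF st refl])
    finally show ?thesis by simp
  qed
  have "distr (avgE \<mu>) borel (map_prod T S) = avgE \<mu>"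
  proof (rule measure_eqI)
    show "sets (distr (avgE \<mu>) borel (map_prod T S)) = sets (avgE \<mu>)" using aP(1) by simp
    fix A assume "A \<in> sets (distr (avgE \<mu>) borel (map_prod T S))"
    then have A: "A \<in> sets (borel :: ('a \<times> 'b) measure)" by simp
    have PA: "map_prod T S -` A \<in> sets borel" using measurable_sets_borel[OF mP A] .
    have shift: "e j -` (map_prod T S -` A) = e (Suc j) -` A" for j
      by (auto simp: e_def funpow_swap1)
    have per_e: "e s0 -` A = (T ^^ s0) -` (e 0 -` A)"
      using per by (auto simp: e_def)
    have "emeasure (distr (avgE \<mu>) borel (map_prod T S)) A = emeasure (avgE \<mu>) (map_prod T S -` A)"
      using A by (subst emeasure_distr) (auto simp: spA measurable_cong_sets[OF aP(1) refl])
    also have "\<dots> = (\<Sum>j<s0. emeasure \<mu> (e (Suc j) -` A)) / of_nat s0"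
      using aP(3)[OF PA] by (simp add: shift)
    also have "(\<Sum>j<s0. emeasure \<mu> (e (Suc j) -` A)) = (\<Sum>j<s0. emeasure \<mu> (e j -` A))"
    proof (rule sum_shift_periodic)
      have "e 0 -` A \<in> sets borel" using measurable_sets_borel[OF me A] .
      then show "emeasure \<mu> (e s0 -` A) = emeasure \<mu> (e 0 -` A)" by (simp add: per_e muR)
    qed
    also have "(\<Sum>j<s0. emeasure \<mu> (e j -` A)) / of_nat s0 = emeasure (avgE \<mu>) A"
      using aP(3)[OF A] by simp
    finally show "emeasure (distr (avgE \<mu>) borel (map_prod T S)) A = emeasure (avgE \<mu>) A" .
  qed
  then show "avgE \<mu> \<in> inv_measures (map_prod T S)"
    unfolding inv_measures_def using aP by simp
  show "distr (avgE \<mu>) borel snd = nu"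
  proof (rule measure_eqI)
    show "sets (distr (avgE \<mu>) borel snd) = sets nu" using nu_props(1) by simp
    fix A assume "A \<in> sets (distr (avgE \<mu>) borel snd)"
    then have A: "A \<in> sets (borel :: 'b measure)" by simp
    have sA: "snd -` A \<in> sets (borel :: ('a \<times> 'b) measure)" using measurable_sets_borel[OF msnd A] .
    have pre: "e j -` (snd -` A) = (if (S ^^ j) y0 \<in> A then UNIV else {})" for j
      by (auto simp: e_def)
    have one: "emeasure \<mu> UNIV = 1" using prob_space.emeasure_space_1[OF ps] sp by simp
    have "emeasure (distr (avgE \<mu>) borel snd) A = emeasure (avgE \<mu>) (snd -` A)"
      using A by (subst emeasure_distr) (auto simp: spA measurable_cong_sets[OF aP(1) refl])
    also have "\<dots> = (\<Sum>j<s0. emeasure \<mu> (e j -` (snd -` A))) / of_nat s0"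
      by (rule aP(3)[OF sA])
    also have "\<dots> = (\<Sum>j<s0. indicator A ((S ^^ j) y0)) / of_nat s0"
      by (intro arg_cong2[where f="(/)"] sum.cong refl) (simp add: pre one indicator_def)
    also have "\<dots> = emeasure nu A" using nu_props(3)[OF A] by simp
    finally show "emeasure (distr (avgE \<mu>) borel snd) A = emeasure nu A" .
  qed
qed

lemma mfst[measurable]: "(fst :: 'a \<times> 'b \<Rightarrow> 'a) \<in> borel \<rightarrow>\<^sub>M borel"
  by (intro borel_measurable_continuous_onI continuous_intros)

lemma rect_borel: "A \<in> sets (borel :: 'a measure) \<Longrightarrow> B \<in> sets (borel :: 'b measure) \<Longrightarrow> A \<times> B \<in> sets (borel :: ('a \<times> 'b) measure)"
proof -
  assume A: "A \<in> sets borel" and B: "B \<in> sets borel"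
  have "A \<times> B = fst -` A \<inter> snd -` B" by auto
  then show ?thesis using measurable_sets_borel[OF mfst A] measurable_sets_borel[OF msnd B] by auto
qed

lemma single_borel: "{y} \<in> sets (borel :: 'b measure)" by (rule borel_closed) simp

lemma Sj_inj: "(S ^^ j) x = (S ^^ j) y \<Longrightarrow> x = y"
  using homeo_inj[OF homeo_funpow[OF hS]] by blast

lemma nu_shift: "emeasure nu {S y} = emeasure nu {y}"
proof -
  define f where "f j = (indicator {S y} ((S ^^ j) y0) :: ennreal)" for j
  have fS: "f (Suc j) = indicator {y} ((S ^^ j) y0)" for j
    using homeo_inj[OF hS, of "(S ^^ j) y0" y] by (auto simp: f_def indicator_def)
  have "(\<Sum>j<s0. f (Suc j)) = (\<Sum>j<s0. f j)" by (rule sum_shift_periodic) (simp add: f_def per)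
  then have "(\<Sum>j<s0. indicator {y} ((S ^^ j) y0) :: ennreal) = (\<Sum>j<s0. f j)"
    by (simp only: fS[symmetric])
  then show ?thesis using nu_props(3)[OF single_borel, of y] nu_props(3)[OF single_borel, of "S y"]
    by (simp only: f_def)
qed

lemma nu_orbit: "emeasure nu {(S ^^ j) y0} = emeasure nu {y0}"
  by (induction j) (simp_all add: nu_shift)

lemma sub_dir:
  assumes m: "m \<in> inv_measures (map_prod T S)" and mnu: "distr m borel snd = nu"
  shows "\<exists>\<mu>\<in>inv_measures (T ^^ s0). m = avgE \<mu>"
proof -
  have st: "sets m = sets borel" and ps: "prob_space m" and inv: "distr m borel (map_prod T S) = m"
    using m by (auto simp: inv_measures_def)
  have sp: "space m = UNIV" using inv_space[OF m] .
  have mP1: "emeasure m (map_prod T S -` B) = emeasure m B" if B: "B \<in> sets borel" for B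
  proof -
    have "emeasure m B = emeasure (distr m borel (map_prod T S)) B" using inv by simp
    also have "\<dots> = emeasure m (map_prod T S -` B)"
      using B by (subst emeasure_distr) (auto simp: sp measurable_cong_sets[OF st refl])
    finally show ?thesis by simp
  qed
  have mPj: "emeasure m ((map_prod T S ^^ j) -` B) = emeasure m B" if B: "B \<in> sets borel" for B j
    using B
  proof (induction j arbitrary: B)
    case 0 then show ?case by simp
  next
    case (Suc j)
    have eq: "(map_prod T S ^^ Suc j) -` B = (map_prod T S ^^ j) -` (map_prod T S -` B)"
      by (simp only: funpow.simps(2) vimage_comp)
    have h: "map_prod T S -` B \<in> sets borel" using measurable_sets_borel[OF mP Suc.prems] .
    show ?case unfolding eq by (simp only: Suc.IH[OF h] mP1[OF Suc.prems])
  qed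
  have msnd_nu: "emeasure m (snd -` B) = emeasure nu B" if B: "B \<in> sets borel" for B
  proof -
    have "emeasure nu B = emeasure (distr m borel snd) B" using mnu by simp
    also have "\<dots> = emeasure m (snd -` B)"
      using B by (subst emeasure_distr) (auto simp: sp measurable_cong_sets[OF st refl])
    finally show ?thesis by simp
  qed
  interpret N: prob_space nu by (rule nu_props(2))
  define r where "r = measure nu {y0}"
  have c_eq: "emeasure nu {y0} = ennreal r" unfolding r_def by (rule N.emeasure_eq_measure)
  have r_pos: "r > 0"
  proof -
    have "(1::ennreal) \<le> (\<Sum>j<s0. indicator {y0} ((S ^^ j) y0))"
      using s0 by (intro member_le_sum[of 0, where f="\<lambda>j. indicator {y0} ((S ^^ j) y0) :: ennreal", simplified]) auto
    then have "emeasure nu {y0} \<noteq> 0"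
      using nu_props(3)[OF single_borel, of y0] s0 by (auto simp: ennreal_divide_eq_0_iff intro!: bexI[where x=0])
    then show ?thesis using c_eq r_def by (simp add: zero_less_measure_iff) 
  qed
  define \<mu>0 where "\<mu>0 = distr (density m (indicator (UNIV \<times> {y0}))) borel fst"
  define \<mu> where "\<mu> = scale_measure (ennreal (1 / r)) \<mu>0"
  have Y0: "UNIV \<times> {y0} \<in> sets (borel :: ('a \<times> 'b) measure)" by (intro rect_borel single_borel) simp
  have st\<mu>: "sets \<mu> = sets borel" by (simp add: \<mu>_def \<mu>0_def)
  have sp\<mu>: "space \<mu> = UNIV" using sets_eq_imp_space_eq[OF st\<mu>] by simp
  have em\<mu>: "emeasure \<mu> A = ennreal (1 / r) * emeasure m (A \<times> {y0})" if A: "A \<in> sets borel" for A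
  proof -
    have mi: "indicator (UNIV \<times> {y0}) \<in> borel_measurable m"
      using Y0 by (simp add: measurable_cong_sets[OF st refl])
    have fA: "fst -` A \<inter> space (density m (indicator (UNIV \<times> {y0}))) \<in> sets m"
      using measurable_sets_borel[OF mfst A] st by (simp add: sp)
    have "emeasure \<mu>0 A = emeasure (density m (indicator (UNIV \<times> {y0}))) (fst -` A \<inter> space (density m (indicator (UNIV \<times> {y0}))))"
      unfolding \<mu>0_def using A by (subst emeasure_distr) (auto simp: measurable_cong_sets[OF st refl])
    also have "\<dots> = \<integral>\<^sup>+ x. indicator (UNIV \<times> {y0}) x * indicator (fst -` A \<inter> space (density m (indicator (UNIV \<times> {y0})))) x \<partial>m"
      by (rule emeasure_density[OF mi]) (use fA in simp)
    also have "\<dots> = \<integral>\<^sup>+ x. indicator (A \<times> {y0}) x \<partial>m"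
      by (rule nn_integral_cong) (auto simp: sp indicator_def)
    also have "\<dots> = emeasure m (A \<times> {y0})"
      using rect_borel[OF A single_borel] st by simp
    finally show ?thesis by (simp add: \<mu>_def)
  qed
  have "\<mu> \<in> inv_measures (T ^^ s0)"
  proof -
    have "emeasure \<mu> UNIV = 1"
    proof -
      have "(UNIV :: 'a set) \<times> {y0} = snd -` {y0}" by auto
      then have "emeasure m (UNIV \<times> {y0}) = emeasure m (snd -` {y0})" by (simp only:)
      also have "\<dots> = ennreal r" using msnd_nu[OF single_borel] c_eq by simp
      finally show ?thesis using em\<mu>[of UNIV] r_pos by (simp flip: ennreal_mult)
    qed
    then have p\<mu>: "prob_space \<mu>" by (intro prob_spaceI) (simp add: sp\<mu>)
    have "distr \<mu> borel (T ^^ s0) = \<mu>"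
    proof (rule measure_eqI)
      show "sets (distr \<mu> borel (T ^^ s0)) = sets \<mu>" by (simp add: st\<mu>)
      fix A assume "A \<in> sets (distr \<mu> borel (T ^^ s0))"
      then have A: "A \<in> sets borel" by simp
      have RA: "(T ^^ s0) -` A \<in> sets borel" using measurable_sets_borel[OF mT A] .
      have eq: "((T ^^ s0) -` A) \<times> {y0} = (map_prod T S ^^ s0) -` (A \<times> {y0})"
        using per Sj_inj[of s0 _ y0] by (auto simp: map_prod_funpow)
      have "emeasure (distr \<mu> borel (T ^^ s0)) A = emeasure \<mu> ((T ^^ s0) -` A)"
        using A by (subst emeasure_distr) (auto simp: sp\<mu> measurable_cong_sets[OF st\<mu> refl])
      also have "\<dots> = ennreal (1 / r) * emeasure m (A \<times> {y0})"
        using em\<mu>[OF RA] eq mPj[OF rect_borel[OF A single_borel]] by simp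
      also have "\<dots> = emeasure \<mu> A" using em\<mu>[OF A] by simp
      finally show "emeasure (distr \<mu> borel (T ^^ s0)) A = emeasure \<mu> A" .
    qed
    then show ?thesis unfolding inv_measures_def using p\<mu> st\<mu> by simp
  qed
  moreover have "m = avgE \<mu>"
  proof (rule measure_eqI)
    show "sets m = sets (avgE \<mu>)" using avgE_props(1)[OF calculation] st by simp
    fix B assume "B \<in> sets m"
    then have B: "B \<in> sets (borel :: ('a \<times> 'b) measure)" using st by simp
    define Orb where "Orb = (\<lambda>j. (S ^^ j) y0) ` {..<s0}"
    have fO: "finite Orb" by (simp add: Orb_def)
    define g where "g y = emeasure m (B \<inter> snd -` {y})" for y
    have Bj: "B \<inter> snd -` {y} \<in> sets borel" for y
      using B measurable_sets_borel[OF msnd single_borel] by auto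
    have pre: "(e j -` B) \<times> {y0} = (map_prod T S ^^ j) -` (B \<inter> snd -` {(S ^^ j) y0})" for j
      using Sj_inj[of j _ y0] by (auto simp: map_prod_funpow e_def)
    have t1: "emeasure \<mu> (e j -` B) = ennreal (1 / r) * g ((S ^^ j) y0)" for j
      using em\<mu>[OF measurable_sets_borel[OF me B]] pre mPj[OF Bj] by (simp add: g_def)
    have t2: "(\<Sum>j<s0. g ((S ^^ j) y0)) = of_nat s0 * ennreal r * (\<Sum>y\<in>Orb. g y)"
    proof -
      have "(\<Sum>j<s0. g ((S ^^ j) y0)) = (\<Sum>j<s0. \<Sum>y\<in>Orb. g y * indicator {y} ((S ^^ j) y0))"
      proof (rule sum.cong[OF refl])
        fix j assume "j \<in> {..<s0}"
        then have "(S ^^ j) y0 \<in> Orb" by (simp add: Orb_def)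
        then show "g ((S ^^ j) y0) = (\<Sum>y\<in>Orb. g y * indicator {y} ((S ^^ j) y0))"
          using fO by (simp add: indicator_def sum.delta' eq_commute[of _ "(S ^^ j) y0"] if_distrib cong: if_cong)
      qed
      also have "\<dots> = (\<Sum>y\<in>Orb. g y * (\<Sum>j<s0. indicator {y} ((S ^^ j) y0)))"
        by (simp add: sum.swap sum_distrib_left)
      also have "\<dots> = (\<Sum>y\<in>Orb. g y * (of_nat s0 * ennreal r))"
      proof (rule sum.cong[OF refl])
        fix y assume "y \<in> Orb"
        then obtain j where y: "y = (S ^^ j) y0" by (auto simp: Orb_def)
        have "(\<Sum>j<s0. indicator {y} ((S ^^ j) y0)) = emeasure nu {y} * of_nat s0"
          using nu_props(3)[OF single_borel, of y] s0 by (simp add: div_times_n)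
        also have "\<dots> = of_nat s0 * ennreal r" using nu_orbit[of j] c_eq y by (simp add: mult.commute)
        finally show "g y * (\<Sum>j<s0. indicator {y} ((S ^^ j) y0)) = g y * (of_nat s0 * ennreal r)" by simp
      qed
      also have "\<dots> = of_nat s0 * ennreal r * (\<Sum>y\<in>Orb. g y)"
        by (simp add: sum_distrib_right mult.commute)
      finally show ?thesis .
    qed
    have t3: "(\<Sum>y\<in>Orb. g y) = emeasure m B"
    proof -
      have "(\<Sum>y\<in>Orb. g y) = emeasure m (\<Union>y\<in>Orb. B \<inter> snd -` {y})"
        unfolding g_def using fO Bj st
        by (intro sum_emeasure) (auto simp: disjoint_family_on_def)
      also have "(\<Union>y\<in>Orb. B \<inter> snd -` {y}) = B \<inter> snd -` Orb" by auto
      also have "emeasure m (B \<inter> snd -` Orb) = emeasure m B"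
      proof -
        have cO: "- Orb \<in> sets (borel :: 'b measure)" using fO by (intro borel_comp borel_closed finite_imp_closed)
        have "emeasure nu (- Orb) = 0"
          using nu_props(3)[OF cO] by (simp add: Orb_def indicator_def)
        then have zN: "emeasure m (snd -` (- Orb)) = 0" using msnd_nu[OF cO] by simp
        have sN: "snd -` (- Orb) \<in> sets m" using measurable_sets_borel[OF msnd cO] st by simp
        have z: "emeasure m (B \<inter> snd -` (- Orb)) = 0"
          by (rule emeasure_eq_0[OF sN zN Int_lower2])
        have eqB: "B = (B \<inter> snd -` Orb) \<union> (B \<inter> snd -` (- Orb))" by auto
        have s1: "B \<inter> snd -` Orb \<in> sets m"
          using B st measurable_sets_borel[OF msnd borel_closed[OF finite_imp_closed[OF fO]]] by auto
        have s2: "B \<inter> snd -` (- Orb) \<in> sets m"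
          using B st measurable_sets_borel[OF msnd cO] by auto
        have "emeasure m B = emeasure m ((B \<inter> snd -` Orb) \<union> (B \<inter> snd -` (- Orb)))"
          using eqB by (rule arg_cong)
        also have "\<dots> = emeasure m (B \<inter> snd -` Orb) + emeasure m (B \<inter> snd -` (- Orb))"
          by (rule plus_emeasure[symmetric, OF s1 s2]) auto
        finally show ?thesis using z by simp
      qed
      finally show ?thesis .
    qed
    have "emeasure (avgE \<mu>) B = (\<Sum>j<s0. emeasure \<mu> (e j -` B)) / of_nat s0"
      by (rule avgE_props(3)[OF calculation B])
    also have "\<dots> = ennreal (1 / r) * (\<Sum>j<s0. g ((S ^^ j) y0)) / of_nat s0"
      by (simp add: t1 sum_distrib_left)
    also have "\<dots> = emeasure m B" using t2 t3 ennreal_cancel_aux[OF r_pos s0] by simp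
    finally show "emeasure m B = emeasure (avgE \<mu>) B" by simp
  qed
  ultimately show ?thesis by blast
qed

lemma set_eq: "{m \<in> inv_measures (map_prod T S). distr m borel snd = nu} = avgE ` inv_measures (T ^^ s0)"
proof
  show "{m \<in> inv_measures (map_prod T S). distr m borel snd = nu} \<subseteq> avgE ` inv_measures (T ^^ s0)"
    using sub_dir by blast
  show "avgE ` inv_measures (T ^^ s0) \<subseteq> {m \<in> inv_measures (map_prod T S). distr m borel snd = nu}"
    using sup_dir by blast
qed

lemma f_bound:
  fixes f :: "'a \<times> 'b \<Rightarrow> real"
  assumes f: "continuous_on UNIV f"
  obtains B where "\<And>z. \<bar>f z\<bar> \<le> B"
proof -
  have "compact (UNIV :: ('a \<times> 'b) set)" using compact_Times[OF cA cB] by simp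
  then have "compact (f ` UNIV)" by (rule compact_continuous_image[OF f])
  then have "bounded (f ` UNIV)" by (rule compact_imp_bounded)
  then obtain B where "\<And>z. \<bar>f z\<bar> \<le> B" unfolding bounded_real by auto
  then show ?thesis by (rule that)
qed

lemma integral_avgE:
  fixes f :: "'a \<times> 'b \<Rightarrow> real"
  assumes f: "continuous_on UNIV f" and \<mu>: "\<mu> \<in> inv_measures (T ^^ s0)"
  shows "integral\<^sup>L (avgE \<mu>) f \<ge> (INF x. (\<Sum>j<s0. f ((T ^^ j) x, (S ^^ j) y0)) / real s0)"
proof -
  obtain B where B: "\<And>z. \<bar>f z\<bar> \<le> B" using f_bound[OF f] by blast
  have mf: "f \<in> borel_measurable borel" using f by (rule borel_measurable_continuous_onI)
  have st: "sets \<mu> = sets borel" and ps: "prob_space \<mu>" using \<mu> by (auto simp: inv_measures_def)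
  have sp: "space \<mu> = UNIV" using inv_space[OF \<mu>] .
  interpret P: prob_space \<mu> by (rule ps)
  note dp = distr_e_props[OF \<mu>]
  define h where "h x = (\<Sum>j<s0. f ((T ^^ j) x, (S ^^ j) y0)) / real s0" for x
  have me': "e j \<in> \<mu> \<rightarrow>\<^sub>M borel" for j using me by (simp add: measurable_cong_sets[OF st refl])
  have mfe: "(\<lambda>x. f (e j x)) \<in> borel_measurable \<mu>" for j
    using measurable_comp[OF me' mf] by (simp add: comp_def)
  have intj: "integrable \<mu> (\<lambda>x. f (e j x))" for j
    by (rule P.integrable_const_bound[where B=B]) (use B mfe in auto)
  have mh: "h \<in> borel_measurable \<mu>"
    unfolding h_def using mfe by (simp add: e_def)
  have hB: "\<bar>h x\<bar> \<le> B" for x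
  proof -
    have "\<bar>\<Sum>j<s0. f ((T ^^ j) x, (S ^^ j) y0)\<bar> \<le> (\<Sum>j<s0. B)"
      by (rule order_trans[OF sum_abs sum_mono]) (rule B)
    then show ?thesis using s0 by (simp add: h_def abs_divide field_simps)
  qed
  have hB': "- B \<le> h x" for x using hB[of x] by linarith
  have bdd: "bdd_below (range h)" using hB' by (intro bdd_belowI[of _ "-B"]) auto
  have "integral\<^sup>L (avgE \<mu>) f = (\<Sum>j<s0. integral\<^sup>L (distr \<mu> borel (e j)) f) / s0"
    unfolding avgE_def by (rule avg_integral[OF s0 dp(1) dp(2) mf B])
  also have "\<dots> = (\<Sum>j<s0. integral\<^sup>L \<mu> (\<lambda>x. f (e j x))) / s0"
    by (simp add: integral_distr[OF me' mf])
  also have "\<dots> = integral\<^sup>L \<mu> h"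
  proof -
    have "integral\<^sup>L \<mu> (\<lambda>x. \<Sum>j<s0. f (e j x)) = (\<Sum>j<s0. integral\<^sup>L \<mu> (\<lambda>x. f (e j x)))"
      by (rule Bochner_Integration.integral_sum) (rule intj)
    moreover have "h = (\<lambda>x. (\<Sum>j<s0. f (e j x)) / real s0)" by (simp add: h_def e_def fun_eq_iff)
    ultimately show ?thesis by simp
  qed
  finally have eq: "integral\<^sup>L (avgE \<mu>) f = integral\<^sup>L \<mu> h" .
  have "(INF x. h x) = integral\<^sup>L \<mu> (\<lambda>_. INF x. h x)" using P.prob_space by (simp add: sp)
  also have "\<dots> \<le> integral\<^sup>L \<mu> h"
  proof (rule integral_mono)
    show "integrable \<mu> (\<lambda>_. INF x. h x)" by simp
    show "integrable \<mu> h" by (rule P.integrable_const_bound[where B=B]) (use hB mh in auto)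
    show "(INF x. h x) \<le> h x" for x using bdd by (rule cINF_lower) simp
  qed
  finally show ?thesis using eq by (simp add: h_def)
qed

lemma psi_bound:
  fixes f :: "'a \<times> 'b \<Rightarrow> real"
  assumes f: "continuous_on UNIV f"
  shows "psi T S f nu \<ge> (INF x. (\<Sum>j<s0. f ((T ^^ j) x, (S ^^ j) y0)) / real s0)"
proof -
  have "{integral\<^sup>L m f | m. m \<in> inv_measures (map_prod T S) \<and> distr m borel snd = nu}
      = (\<lambda>m. integral\<^sup>L m f) ` {m \<in> inv_measures (map_prod T S). distr m borel snd = nu}" by auto
  also have "\<dots> = (\<lambda>\<mu>. integral\<^sup>L (avgE \<mu>) f) ` inv_measures (T ^^ s0)"
    unfolding set_eq by (simp add: image_image)
  finally have L: "{integral\<^sup>L m f | m. m \<in> inv_measures (map_prod T S) \<and> distr m borel snd = nu}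
      = (\<lambda>\<mu>. integral\<^sup>L (avgE \<mu>) f) ` inv_measures (T ^^ s0)" .
  have ne: "inv_measures (T ^^ s0) \<noteq> {}" by (rule krylov_bogolyubov[OF cA homeo_funpow[OF hT]])
  show ?thesis unfolding psi_def L
    by (rule cInf_greatest) (use ne integral_avgE[OF f] in auto)
qed

end

theorem lemma2p11:
  fixes T :: "'a::metric_space \<Rightarrow> 'a" and S :: "'b::metric_space \<Rightarrow> 'b"
    and y0 :: 'b and s0 :: nat and \<nu> :: "'b measure"
  assumes "tds T" and "tds S"
    and "s0 > 0" and "(S ^^ s0) y0 = y0"
    and "\<nu> = avg_measure s0 (\<lambda>j. return borel ((S ^^ j) y0))"
  shows "({m \<in> inv_measures (map_prod T S). distr m borel snd = \<nu>}
           = (\<lambda>\<mu>. avg_measure s0 (\<lambda>j. distr (\<mu> \<Otimes>\<^sub>M return borel y0) borel ((map_prod T S) ^^ j)))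
               ` inv_measures (T ^^ s0))
         \<and> (\<forall>f :: 'a \<times> 'b \<Rightarrow> real. continuous_on UNIV f \<longrightarrow>
           psi T S f \<nu> \<ge> (INF x. (\<Sum>j<s0. f ((T ^^ j) x, (S ^^ j) y0)) / real s0))"
proof -
  obtain T' where cA: "compact (UNIV :: 'a set)" and hT: "homeomorphism UNIV UNIV T T'"
    using assms(1) unfolding tds_def by blast
  obtain S' where cB: "compact (UNIV :: 'b set)" and hS: "homeomorphism UNIV UNIV S S'"
    using assms(2) unfolding tds_def by blast
  interpret setup2 T S y0 s0 T' S'
    by unfold_locales (use cA cB hT hS assms(3,4) in auto)
  have nu_eq: "\<nu> = nu" using assms(5) by (simp add: nu_def)
  have img: "(\<lambda>\<mu>. avg_measure s0 (\<lambda>j. distr (\<mu> \<Otimes>\<^sub>M return borel y0) borel ((map_prod T S) ^^ j)))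
               ` inv_measures (T ^^ s0) = avgE ` inv_measures (T ^^ s0)"
    by (rule image_cong[OF refl]) (simp add: avgE_def rhs_eq)
  show ?thesis using set_eq psi_bound by (simp add: nu_eq img)
qed

end
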